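(* Let $t$ be an $\mathrm{SL}_2$-tiling with $t_{ij}=1$. Then $t_{xy}\neq 1$ for all $(x,y)$ with $x<i,\ y<j$, and for all $(x,y)$ with $x>i,\ y>j$.
   Context: An $\mathrm{SL}_2$-tiling is a map $t:\mathbb{Z}\times\mathbb{Z}\to\{1,2,3,\dots\}$, $(i,j)\mapsto t_{ij}$, with $t_{ij}t_{i+1,j+1}-t_{i,j+1}t_{i+1,j}=1$ for all $i,j$. *)

theory Defs
  imports Main
begin

definition SL2_tiling :: "(int \<Rightarrow> int \<Rightarrow> int) \<Rightarrow> bool" where
  "SL2_tiling t \<longleftrightarrow>
     (\<forall>i j. t i j \<ge> 1) \<and>
     (\<forall>i j. t i j * t (i+1) (j+1) - t i (j+1) * t (i+1) j = 1)"

end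

theory Submission
  imports Defs
begin

lemma chain_aux:
  fixes a b c d e f :: int
  assumes "a*d > b*c" "c*f > d*e" "b > 0" "c > 0" "d > 0" "e > 0"
  shows "a*f > b*e"
proof -
  have "(a*d)*(c*f) > (b*c)*(d*e)"
    by (rule mult_strict_mono) (use assms in \<open>auto intro: less_imp_le mult_pos_pos simp: less_le_trans[OF mult_pos_pos[of b c]]\<close>)
  hence "(a*f)*(c*d) > (b*e)*(c*d)" by (simp add: algebra_simps)
  moreover have "c*d > 0" using assms by simp
  ultimately show ?thesis by (simp add: mult_less_cancel_right)
qed

lemma rows:
  assumes T: "SL2_tiling t"
  shows "t x y * t (x + 1 + int k) (y+1) > t x (y+1) * t (x + 1 + int k) y"
proof (induction k)
  case 0
  from T have "t x y * t (x+1) (y+1) - t x (y+1) * t (x+1) y = 1" unfolding SL2_tiling_def by blast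
  thus ?case by simp
next
  case (Suc k)
  let ?x = "x + 1 + int k"
  from T have d: "t ?x y * t (?x+1) (y+1) - t ?x (y+1) * t (?x+1) y = 1" unfolding SL2_tiling_def by blast
  have pos: "\<And>a b. t a b > 0" using T unfolding SL2_tiling_def by (meson zero_less_one less_le_trans)
  have "t x y * t (?x+1) (y+1) > t x (y+1) * t (?x+1) y"
  proof -
    have h1: "t x y * t ?x (y+1) > t x (y+1) * t ?x y" using Suc by simp
    have h2: "t ?x y * t (?x+1) (y+1) > t ?x (y+1) * t (?x+1) y" using d by linarith
    show ?thesis by (rule chain_aux[OF h1 h2 pos pos pos pos])
  qed
  thus ?case by (simp add: add.assoc)
qed

lemma minor:
  assumes T: "SL2_tiling t" and "x < x'"
  shows "t x y * t x' (y + 1 + int k) > t x (y + 1 + int k) * t x' y"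
proof -
  obtain m where m: "x' = x + 1 + int m" 
    by (rule that[of "nat (x' - x - 1)"]) (use assms(2) in simp)
  have pos: "\<And>a b. t a b > 0" using T unfolding SL2_tiling_def by (meson zero_less_one less_le_trans)
  show ?thesis unfolding m
  proof (induction k)
    case 0 thus ?case using rows[OF T] by simp
  next
    case (Suc k)
    let ?y = "y + 1 + int k"
    have s: "t x ?y * t (x + 1 + int m) (?y+1) > t x (?y+1) * t (x + 1 + int m) ?y"
      using rows[OF T] by blast
    have "t x y * t (x + 1 + int m) (?y+1) > t x (?y+1) * t (x + 1 + int m) y"
    proof -
      have "(t x y * t (x + 1 + int m) ?y) * (t x ?y * t (x + 1 + int m) (?y+1))
            > (t x ?y * t (x + 1 + int m) y) * (t x (?y+1) * t (x + 1 + int m) ?y)"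
        by (rule mult_strict_mono) (use Suc s pos in \<open>auto intro: less_imp_le mult_pos_pos\<close>)
      hence "(t x y * t (x + 1 + int m) (?y+1)) * (t x ?y * t (x + 1 + int m) ?y)
            > (t x (?y+1) * t (x + 1 + int m) y) * (t x ?y * t (x + 1 + int m) ?y)"
        by (simp add: algebra_simps)
      moreover have "t x ?y * t (x + 1 + int m) ?y > 0" using pos by simp
      ultimately show ?thesis by (simp add: mult_less_cancel_right)
    qed
    thus ?case by (simp add: add.assoc)
  qed
qed

lemma minor2:
  assumes T: "SL2_tiling t" and "x < x'" "y < y'"
  shows "t x y * t x' y' > t x y' * t x' y"
proof -
  obtain k where "y' = y + 1 + int k" 
    by (rule that[of "nat (y' - y - 1)"]) (use assms(3) in simp)
  thus ?thesis using minor[OF T assms(2)] by simp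
qed

theorem proposition6p2:
  fixes t :: "int \<Rightarrow> int \<Rightarrow> int" and i j :: int
  assumes "SL2_tiling t" and "t i j = 1"
  shows "(\<forall>x y. x < i \<and> y < j \<longrightarrow> t x y \<noteq> 1) \<and>
         (\<forall>x y. x > i \<and> y > j \<longrightarrow> t x y \<noteq> 1)"
proof -
  have ge: "\<And>a b. t a b \<ge> 1" using assms(1) unfolding SL2_tiling_def by blast
  have one: "t a b * t c d \<ge> 1" for a b c d
    using ge[of a b] ge[of c d] using mult_mono[OF ge[of a b] ge[of c d]] by simp
  show ?thesis
  proof (intro conjI allI impI)
    fix x y assume "x < i \<and> y < j"
    hence "t x y * t i j > t x j * t i y" using minor2[OF assms(1)] by blast
    thus "t x y \<noteq> 1" using assms(2) one[of x j i y] by auto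
  next
    fix x y assume "x > i \<and> y > j"
    hence "t i j * t x y > t i y * t x j" using minor2[OF assms(1)] by blast
    thus "t x y \<noteq> 1" using assms(2) one[of i y x j] by auto
  qed
qed

end
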